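(* Assume (A1), (A2), (A3) and $n\ge 3$. Let $\delta\in(0,1)$, $\beta>0$, and $\mathcal R=\{r_1,\dots,r_m\}$ with positive integers $r_1<\dots<r_m$, and run the algorithm ADAPT described in the context at a time $t\ge r_1$. Let $\hat{\bm C}$ be the matrix selected by ADAPT (i.e. $\hat{\bm C}=\hat{\bm C}^{[r_k]}(t)$ for the final value of $k$). Then with probability at least $1-\delta$, $$\lVert\hat{\bm C}-\bm C(t)\rVert_\infty\le\Phi_{\mathcal R,\beta}\min_{r\in\mathbb{Z},\ r_1\le r\le\min(t,r_m)}\left(\frac{A_{\delta,n,m}}{\sqrt r}+\sum_{u=t-r+1}^{t-1}\lVert\bm C(u)-\bm C(u+1)\rVert_\infty\right),$$ where $A_{\delta,n,m}=\sqrt{2\ln[(2m-1)n(n-1)/\delta]}$, $\gamma_M=\max_{k}\sqrt{r_k/r_{k+1}}$, $\gamma_m=\min_k\sqrt{r_k/r_{k+1}}$ ($1\le k\le m-1$), and $\Phi_{\mathcal R,\beta}=1+\max\left\{\frac{2\beta+2}{\gamma_m(1-\gamma_M)},\frac{2\beta+2}{\beta(1-\gamma_M)}\right\}$.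
   Context: Norms: $\lVert\bm M\rVert_\infty=\max_{i,j}|M_{ij}|$. Setting: $\mathcal X=\mathbb{R}^d$, true labeling $y:\mathcal X\to\{-1,1\}$, weak labelers $\ell_1,\dots,\ell_n:\mathcal X\to\{-1,1\}$, inputs $X_k\sim D_k$. (A1): for every finite $t$, $(X_1,\dots,X_t)\sim\prod_{k=1}^tD_k$. (A2): for every $t$ and $i\ne j$, with $X_t\sim D_t$, the events $\{\ell_i(X_t)\ne y(X_t)\}$, $\{\ell_j(X_t)\ne y(X_t)\}$ are independent conditionally on $y(X_t)$. (A3): there is $\tau>0$ with $\Pr_{X\sim D_t}(\ell_i(X)=y(X))\ge\frac12+\tau$ for all $t,i$. Correlation matrix $C_{ij}(k)=\mathbb{E}_{X\sim D_k}[\ell_i(X)\ell_j(X)]$; empirical correlation matrix $\hat{\bm C}^{[r]}(t)=\frac1r\sum_{k=t-r+1}^t\bm v_k\bm v_k^T$ with $\bm v_k=(\ell_1(X_k),\dots,\ell_n(X_k))^T$. Algorithm ADAPT (window-selection part): set $A=A_{\delta,n,m}$, $k=1$. While $k\le m-1$ and $r_{k+1}\le t$: if $\lVert\hat{\bm C}^{[r_{k+1}]}(t)-\hat{\bm C}^{[r_k]}(t)\rVert_\infty\le A\left[\frac{2\beta}{\sqrt{r_k}}+\sqrt{\frac{1-r_k/r_{k+1}}{r_k}}\right]$ set $k\leftarrow k+1$, otherwise stop the loop. The selected matrix is $\hat{\bm C}=\hat{\bm C}^{[r_k]}(t)$. *)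

theory Defs
  imports "HOL-Probability.Probability"
begin

text \<open>Matrices indexed by 1..n are represented as functions nat => nat => real;
  the max-norm takes the maximum absolute entry over i, j in 1..n.\<close>
definition maxnorm :: "nat \<Rightarrow> (nat \<Rightarrow> nat \<Rightarrow> real) \<Rightarrow> real" where
  "maxnorm n M = Max {\<bar>M i j\<bar> | i j. i \<in> {1..n} \<and> j \<in> {1..n}}"

definition corr_mat ::
  "(nat \<Rightarrow> 'x \<Rightarrow> real) \<Rightarrow> (nat \<Rightarrow> 'x measure) \<Rightarrow> nat \<Rightarrow> nat \<Rightarrow> nat \<Rightarrow> real" where
  "corr_mat ell D k i j = (\<integral>x. ell i x * ell j x \<partial>(D k))"

text \<open>Empirical correlation matrix with window r at time t (requires r \<le> t).\<close>
definition emp_corr ::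
  "(nat \<Rightarrow> 'x \<Rightarrow> real) \<Rightarrow> (nat \<Rightarrow> 'm \<Rightarrow> 'x) \<Rightarrow> nat \<Rightarrow> nat \<Rightarrow> 'm \<Rightarrow> nat \<Rightarrow> nat \<Rightarrow> real" where
  "emp_corr ell X r t \<omega> i j =
     (1 / real r) * (\<Sum>k = t - r + 1..t. ell i (X k \<omega>) * ell j (X k \<omega>))"

definition A_const :: "real \<Rightarrow> nat \<Rightarrow> nat \<Rightarrow> real" where
  "A_const \<delta> n m = sqrt (2 * ln ((2 * real m - 1) * real n * (real n - 1) / \<delta>))"

function adapt_loop :: "(nat \<Rightarrow> bool) \<Rightarrow> nat \<Rightarrow> nat \<Rightarrow> nat" where
  "adapt_loop goon m k = (if k \<le> m - 1 \<and> goon k then adapt_loop goon m (k + 1) else k)"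
  by pat_completeness auto
termination by (relation "Wellfounded.measure (\<lambda>(g, m, k). Suc m - k)") auto

definition adapt_test ::
  "(nat \<Rightarrow> 'x \<Rightarrow> real) \<Rightarrow> (nat \<Rightarrow> 'm \<Rightarrow> 'x) \<Rightarrow> nat \<Rightarrow> (nat \<Rightarrow> nat) \<Rightarrow> real \<Rightarrow> real
     \<Rightarrow> nat \<Rightarrow> 'm \<Rightarrow> nat \<Rightarrow> bool" where
  "adapt_test ell X n r A \<beta> t \<omega> k =
     (r (k + 1) \<le> t \<and>
      maxnorm n (\<lambda>i j. emp_corr ell X (r (k + 1)) t \<omega> i j - emp_corr ell X (r k) t \<omega> i j)
        \<le> A * (2 * \<beta> / sqrt (real (r k))
               + sqrt ((1 - real (r k) / real (r (k + 1))) / real (r k))))"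

definition adapt_index ::
  "(nat \<Rightarrow> 'x \<Rightarrow> real) \<Rightarrow> (nat \<Rightarrow> 'm \<Rightarrow> 'x) \<Rightarrow> nat \<Rightarrow> (nat \<Rightarrow> nat) \<Rightarrow> nat \<Rightarrow> real \<Rightarrow> real
     \<Rightarrow> nat \<Rightarrow> 'm \<Rightarrow> nat" where
  "adapt_index ell X n r m \<delta> \<beta> t \<omega> =
     adapt_loop (adapt_test ell X n r (A_const \<delta> n m) \<beta> t \<omega>) m 1"

definition adapt_matrix ::
  "(nat \<Rightarrow> 'x \<Rightarrow> real) \<Rightarrow> (nat \<Rightarrow> 'm \<Rightarrow> 'x) \<Rightarrow> nat \<Rightarrow> (nat \<Rightarrow> nat) \<Rightarrow> nat \<Rightarrow> real \<Rightarrow> real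
     \<Rightarrow> nat \<Rightarrow> 'm \<Rightarrow> nat \<Rightarrow> nat \<Rightarrow> real" where
  "adapt_matrix ell X n r m \<delta> \<beta> t \<omega> =
     emp_corr ell X (r (adapt_index ell X n r m \<delta> \<beta> t \<omega>)) t \<omega>"

definition gamma_max :: "(nat \<Rightarrow> nat) \<Rightarrow> nat \<Rightarrow> real" where
  "gamma_max r m = Max ((\<lambda>k. sqrt (real (r k) / real (r (k + 1)))) ` {1..m - 1})"

definition gamma_min :: "(nat \<Rightarrow> nat) \<Rightarrow> nat \<Rightarrow> real" where
  "gamma_min r m = Min ((\<lambda>k. sqrt (real (r k) / real (r (k + 1)))) ` {1..m - 1})"

definition Phi :: "(nat \<Rightarrow> nat) \<Rightarrow> nat \<Rightarrow> real \<Rightarrow> real" where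
  "Phi r m \<beta> = 1 + max ((2 * \<beta> + 2) / (gamma_min r m * (1 - gamma_max r m)))
                         ((2 * \<beta> + 2) / (\<beta> * (1 - gamma_max r m)))"

end

theory Submission
  imports Defs
begin


lemma distr_eq_imp_measurable:
  assumes M: "prob_space M" and N: "prob_space N" and f: "f \<in> space M \<rightarrow> space N"
    and eq: "distr M N f = N"
  shows "f \<in> measurable M N"
proof (rule measurableI)
  show "\<And>x. x \<in> space M \<Longrightarrow> f x \<in> space N" using f by auto
  fix A assume A: "A \<in> sets N"
  show "f -` A \<inter> space M \<in> sets M"
  proof (rule ccontr)
    assume nA: "f -` A \<inter> space M \<notin> sets M"
    define B where "B = space N - A"
    have B: "B \<in> sets N" using A by (auto simp: B_def)
    have pre: "f -` B \<inter> space M = space M - (f -` A \<inter> space M)" using f by (auto simp: B_def)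
    have nB: "f -` B \<inter> space M \<notin> sets M"
    proof
      assume "f -` B \<inter> space M \<in> sets M"
      hence "space M - (f -` B \<inter> space M) \<in> sets M" by auto
      moreover have "space M - (f -` B \<inter> space M) = f -` A \<inter> space M" using pre by auto
      ultimately show False using nA by simp
    qed
    have z: "emeasure N C = 0" if "C \<in> sets N" "f -` C \<inter> space M \<notin> sets M" for C
    proof -
      have "emeasure N C = emeasure (distr M N f) C" using eq by simp
      also have "\<dots> = 0"
        unfolding distr_def emeasure_measure_of_conv using that by (simp add: emeasure_notin_sets)
      finally show ?thesis .
    qed
    have "emeasure N A + emeasure N B = emeasure N (A \<union> B)"
      using A B by (intro plus_emeasure) (auto simp: B_def)
    also have "A \<union> B = space N" using sets.sets_into_space[OF A] by (auto simp: B_def)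
    finally have "emeasure N A + emeasure N B = 1" using prob_space.emeasure_space_1[OF N] by simp
    thus False using z[OF A nA] z[OF B nB] by simp
  qed
qed


locale setting =
  fixes M :: "'m measure" and X :: "nat \<Rightarrow> 'm \<Rightarrow> real ^ 'd"
    and D :: "nat \<Rightarrow> (real ^ 'd) measure" and ell :: "nat \<Rightarrow> real ^ 'd \<Rightarrow> real"
    and n t :: nat
  assumes M: "prob_space M"
    and D_prob: "\<And>k. k \<ge> 1 \<Longrightarrow> prob_space (D k)"
    and D_sets: "\<And>k. k \<ge> 1 \<Longrightarrow> sets (D k) = sets borel"
    and ell_meas: "\<And>i. i \<in> {1..n} \<Longrightarrow> ell i \<in> borel_measurable borel"
    and ell_val: "\<And>i x. i \<in> {1..n} \<Longrightarrow> ell i x \<in> {-1, 1}"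
    and A1t: "distr M (PiM {1..t} D) (\<lambda>\<omega>. \<lambda>k\<in>{1..t}. X k \<omega>) = PiM {1..t} D"
    and t1: "t \<ge> 1"
begin

sublocale prob_space M by (rule M)

definition g :: "nat \<Rightarrow> nat \<Rightarrow> real ^ 'd \<Rightarrow> real" where
  "g i j x = ell i x * ell j x"

definition dev :: "(nat \<Rightarrow> real) \<Rightarrow> nat \<Rightarrow> nat \<Rightarrow> 'm \<Rightarrow> real" where
  "dev w i j \<omega> = (\<Sum>u\<in>{1..t}. w u * (g i j (X u \<omega>) - corr_mat ell D u i j))"

lemma space_D: "k \<ge> 1 \<Longrightarrow> space (D k) = UNIV"
  using sets_eq_imp_space_eq[OF D_sets] by simp

lemma F_meas: "(\<lambda>\<omega>. \<lambda>k\<in>{1..t}. X k \<omega>) \<in> measurable M (PiM {1..t} D)"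
  by (rule distr_eq_imp_measurable[OF M _ _ A1t])
     (auto simp: D_prob space_PiM space_D intro!: prob_space_PiM)

lemma X_meas: assumes u: "u \<in> {1..t}" shows "X u \<in> measurable M (D u)"
proof -
  have "(\<lambda>\<omega>. (\<lambda>k\<in>{1..t}. X k \<omega>) u) \<in> measurable M (D u)"
    using measurable_comp[OF F_meas measurable_component_singleton[OF u]] by (simp add: comp_def)
  thus ?thesis using u by simp
qed

lemma X_borel: assumes u: "u \<in> {1..t}" shows "X u \<in> borel_measurable M"
proof -
  have "sets (D u) = sets borel" using u D_sets by simp
  thus ?thesis using X_meas[OF u] measurable_cong_sets[OF refl, of "D u" borel M] by simp
qed

lemma X_distr: assumes u: "u \<in> {1..t}" shows "distr M (D u) (X u) = D u"
proof -
  have "distr M (D u) (X u) = distr M (D u) ((\<lambda>x. x u) \<circ> (\<lambda>\<omega>. \<lambda>k\<in>{1..t}. X k \<omega>))"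
    using u by (intro distr_cong) auto
  also have "\<dots> = distr (distr M (PiM {1..t} D) (\<lambda>\<omega>. \<lambda>k\<in>{1..t}. X k \<omega>)) (D u) (\<lambda>x. x u)"
    by (rule distr_distr[symmetric, OF measurable_component_singleton[OF u] F_meas])
  also have "\<dots> = D u" unfolding A1t using u by (intro distr_PiM_component) (auto simp: D_prob)
  finally show ?thesis .
qed

lemma X_indep: "indep_vars D X {1..t}"
proof -
  have "PiM {1..t} (\<lambda>i. distr M (D i) (X i)) = PiM {1..t} D" by (rule PiM_cong) (auto simp: X_distr)
  hence "distr M (PiM {1..t} D) (\<lambda>\<omega>. \<lambda>k\<in>{1..t}. X k \<omega>) = PiM {1..t} (\<lambda>i. distr M (D i) (X i))"
    using A1t by simp
  thus ?thesis using t1 by (subst indep_vars_iff_distr_eq_PiM') (auto simp: X_meas)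
qed

lemma g_meas: "i \<in> {1..n} \<Longrightarrow> j \<in> {1..n} \<Longrightarrow> u \<ge> 1 \<Longrightarrow> g i j \<in> borel_measurable (D u)"
proof -
  assume a: "i \<in> {1..n}" "j \<in> {1..n}" "u \<ge> 1"
  have "sets (D u) = sets borel" using a D_sets by simp
  hence e: "borel_measurable (D u) = borel_measurable borel" by (rule measurable_cong_sets) simp
  show ?thesis unfolding e g_def using ell_meas a by simp
qed

lemma g_bound: "i \<in> {1..n} \<Longrightarrow> j \<in> {1..n} \<Longrightarrow> \<bar>g i j x\<bar> \<le> 1"
  using ell_val[of i x] ell_val[of j x] unfolding g_def by auto

lemma g_diag: "i \<in> {1..n} \<Longrightarrow> g i i x = 1"
  using ell_val[of i x] unfolding g_def by auto

lemma g_sym: "g i j x = g j i x" unfolding g_def by simp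

lemma corr_diag: assumes "i \<in> {1..n}" "u \<ge> 1" shows "corr_mat ell D u i i = 1"
proof -
  interpret Du: prob_space "D u" using D_prob assms by simp
  have "corr_mat ell D u i i = (\<integral>x. 1 \<partial>D u)"
    unfolding corr_mat_def using g_diag[OF assms(1)] by (simp add: g_def)
  thus ?thesis by (simp add: Du.prob_space)
qed

lemma corr_sym: "corr_mat ell D u i j = corr_mat ell D u j i"
  unfolding corr_mat_def by (simp add: mult.commute)

lemma expect_g: assumes "i \<in> {1..n}" "j \<in> {1..n}" "u \<in> {1..t}"
  shows "expectation (\<lambda>\<omega>. g i j (X u \<omega>)) = corr_mat ell D u i j"
proof -
  have "expectation (\<lambda>\<omega>. g i j (X u \<omega>)) = (\<integral>x. g i j x \<partial>(distr M (D u) (X u)))"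
    using assms by (intro integral_distr[symmetric, OF X_meas[OF assms(3)] g_meas]) auto
  also have "\<dots> = corr_mat ell D u i j" using assms unfolding X_distr[OF assms(3)] corr_mat_def g_def by simp
  finally show ?thesis .
qed

lemma dev_diag: "i \<in> {1..n} \<Longrightarrow> dev w i i \<omega> = 0"
  unfolding dev_def by (auto simp: g_diag corr_diag intro!: sum.neutral)

lemma dev_sym: "dev w i j \<omega> = dev w j i \<omega>"
  unfolding dev_def by (simp add: g_sym corr_sym)

lemma dev_neg: "dev (\<lambda>u. - w u) i j \<omega> = - dev w i j \<omega>"
  unfolding dev_def by (simp add: sum_negf)

lemma dev_meas: assumes "i \<in> {1..n}" "j \<in> {1..n}" shows "dev w i j \<in> borel_measurable M"
  unfolding dev_def
  by (intro borel_measurable_sum borel_measurable_times borel_measurable_diff borel_measurable_const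
       measurable_compose[OF X_meas g_meas]) (use assms in auto)

lemma hoeff:
  assumes ij: "i \<in> {1..n}" "j \<in> {1..n}" and Aa: "Aa \<ge> 0"
  shows "prob {\<omega>\<in>space M. dev w i j \<omega> > Aa * sqrt (\<Sum>u\<in>{1..t}. (w u)\<^sup>2)} \<le> exp (- (Aa\<^sup>2) / 2)"
proof (cases "(\<Sum>u\<in>{1..t}. (w u)\<^sup>2) = 0")
  case True
  hence "\<forall>u\<in>{1..t}. (w u)\<^sup>2 = 0" by (subst (asm) sum_nonneg_eq_0_iff) auto
  hence "\<And>\<omega>. dev w i j \<omega> = 0" unfolding dev_def by (auto intro!: sum.neutral)
  hence e: "{\<omega>\<in>space M. dev w i j \<omega> > Aa * sqrt (\<Sum>u\<in>{1..t}. (w u)\<^sup>2)} = {}" using True by auto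
  show ?thesis unfolding e by simp
next
  case False
  define s where "s = (\<Sum>u\<in>{1..t}. (w u)\<^sup>2)"
  have s0: "s > 0" using False unfolding s_def by (metis sum_nonneg zero_le_power2 order_less_le)
  define Y where "Y = (\<lambda>u \<omega>. w u * g i j (X u \<omega>))"
  define \<mu> where "\<mu> = (\<Sum>u\<in>{1..t}. expectation (Y u))"
  interpret H: Hoeffding_ineq M "{1..t}" Y "\<lambda>u. - \<bar>w u\<bar>" "\<lambda>u. \<bar>w u\<bar>" \<mu>
  proof unfold_locales
    show "finite {1..t}" by simp
    show "indep_vars (\<lambda>_. borel) Y {1..t}"
      unfolding Y_def
      by (rule indep_vars_compose2[OF X_indep, where Y="\<lambda>u x. w u * g i j x"])
         (use ij g_meas in auto)
    fix u assume "u \<in> {1..t}"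
    show "AE x in M. Y u x \<in> {- \<bar>w u\<bar>..\<bar>w u\<bar>}"
    proof (rule AE_I2)
      fix x
      have "\<bar>w u * g i j (X u x)\<bar> \<le> \<bar>w u\<bar> * 1"
        unfolding abs_mult by (intro mult_left_mono g_bound ij) auto
      thus "Y u x \<in> {- \<bar>w u\<bar>..\<bar>w u\<bar>}" unfolding Y_def by (auto simp: abs_le_iff)
    qed
  qed (simp add: \<mu>_def)
  have mu: "\<mu> = (\<Sum>u\<in>{1..t}. w u * corr_mat ell D u i j)"
    unfolding \<mu>_def Y_def by (intro sum.cong refl) (use expect_g[OF ij] in simp)
  have dv: "dev w i j \<omega> = (\<Sum>u\<in>{1..t}. Y u \<omega>) - \<mu>" for \<omega>
    unfolding dev_def mu Y_def by (simp add: sum_subtractf right_diff_distrib)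
  have Ym: "Y u \<in> borel_measurable M" if "u \<in> {1..t}" for u
    using that ij unfolding Y_def
    by (intro borel_measurable_times borel_measurable_const measurable_compose[OF X_meas g_meas]) auto
  have sub: "{\<omega>\<in>space M. dev w i j \<omega> > Aa * sqrt s} \<subseteq> {x\<in>space M. (\<Sum>u\<in>{1..t}. Y u x) \<ge> \<mu> + Aa * sqrt s}"
    unfolding dv by auto
  have "prob {\<omega>\<in>space M. dev w i j \<omega> > Aa * sqrt s} \<le> prob {x\<in>space M. (\<Sum>u\<in>{1..t}. Y u x) \<ge> \<mu> + Aa * sqrt s}"
    by (rule finite_measure_mono[OF sub]) (use Ym in measurable)
  also have "\<dots> \<le> exp (-2 * (Aa * sqrt s)\<^sup>2 / (\<Sum>u\<in>{1..t}. (\<bar>w u\<bar> - - \<bar>w u\<bar>)\<^sup>2))"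
  proof (rule H.Hoeffding_ineq_ge)
    show "0 \<le> Aa * sqrt s" using Aa s0 by simp
    have "(\<Sum>u\<in>{1..t}. (\<bar>w u\<bar> - - \<bar>w u\<bar>)\<^sup>2) = 4 * s"
      unfolding s_def sum_distrib_left by (intro sum.cong) (auto simp: power2_eq_square)
    thus "0 < (\<Sum>u\<in>{1..t}. (\<bar>w u\<bar> - - \<bar>w u\<bar>)\<^sup>2)" using s0 by simp
  qed
  also have "(\<Sum>u\<in>{1..t}. (\<bar>w u\<bar> - - \<bar>w u\<bar>)\<^sup>2) = 4 * s"
    unfolding s_def sum_distrib_left by (intro sum.cong) (auto simp: power2_eq_square)
  also have "-2 * (Aa * sqrt s)\<^sup>2 / (4 * s) = - (Aa\<^sup>2) / 2"
    using s0 by (simp add: power_mult_distrib)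
  finally show ?thesis unfolding s_def .
qed

end




declare adapt_loop.simps[simp del]

lemma loop_props:
  "1 \<le> k0 \<Longrightarrow> k0 \<le> m \<Longrightarrow> k0 \<le> adapt_loop g m k0 \<and> adapt_loop g m k0 \<le> m \<and>
     (\<forall>j\<in>{k0..<adapt_loop g m k0}. g j) \<and> \<not> (adapt_loop g m k0 \<le> m - 1 \<and> g (adapt_loop g m k0))"
proof (induction g m k0 rule: adapt_loop.induct)
  case (1 goon m k)
  show ?case
  proof (cases "k \<le> m - 1 \<and> goon k")
    case True
    have k1: "k + 1 \<le> m" using True "1.prems" by linarith
    have IH: "k + 1 \<le> adapt_loop goon m (k + 1) \<and> adapt_loop goon m (k + 1) \<le> m \<and>
     (\<forall>j\<in>{k + 1..<adapt_loop goon m (k + 1)}. goon j) \<and>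
     \<not> (adapt_loop goon m (k + 1) \<le> m - 1 \<and> goon (adapt_loop goon m (k + 1)))"
      using "1.IH"[OF True] k1 by simp
    have e: "adapt_loop goon m k = adapt_loop goon m (k + 1)" using True by (subst adapt_loop.simps) simp
    have "\<forall>j\<in>{k..<adapt_loop goon m (k + 1)}. goon j"
    proof
      fix j assume "j \<in> {k..<adapt_loop goon m (k + 1)}"
      thus "goon j" using IH True by (cases "j = k") auto
    qed
    thus ?thesis unfolding e using IH by auto
  next
    case False
    have e: "adapt_loop goon m k = k" by (subst adapt_loop.simps) (rule if_not_P[OF False])
    show ?thesis unfolding e using False "1.prems" by auto
  qed
qed

lemma loop_char:
  assumes "1 \<le> k0" "k0 \<le> m"
  shows "adapt_loop g m k0 = k \<longleftrightarrow>
     k0 \<le> k \<and> k \<le> m \<and> (\<forall>j\<in>{k0..<k}. g j) \<and> \<not> (k \<le> m - 1 \<and> g k)"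
proof
  assume "adapt_loop g m k0 = k" thus "k0 \<le> k \<and> k \<le> m \<and> (\<forall>j\<in>{k0..<k}. g j) \<and> \<not> (k \<le> m - 1 \<and> g k)"
    using loop_props[OF assms, of g] by simp
next
  assume a: "k0 \<le> k \<and> k \<le> m \<and> (\<forall>j\<in>{k0..<k}. g j) \<and> \<not> (k \<le> m - 1 \<and> g k)"
  define k' where "k' = adapt_loop g m k0"
  have b: "k0 \<le> k' \<and> k' \<le> m \<and> (\<forall>j\<in>{k0..<k'}. g j) \<and> \<not> (k' \<le> m - 1 \<and> g k')"
    using loop_props[OF assms, of g] unfolding k'_def by simp
  have "\<not> k < k'"
  proof
    assume "k < k'"
    hence "g k" "k \<le> m - 1" using a b by auto
    thus False using a by simp
  qed
  moreover have "\<not> k' < k"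
  proof
    assume "k' < k"
    hence "g k'" "k' \<le> m - 1" using a b by auto
    thus False using b by simp
  qed
  ultimately show "adapt_loop g m k0 = k" unfolding k'_def by simp
qed


lemma maxnorm_set: "{\<bar>F i j\<bar> | i j. i \<in> {1..n} \<and> j \<in> {1..n}} = (\<lambda>(i,j). \<bar>F i j\<bar>) ` ({1..n} \<times> {1..n})"
  by force

lemma maxnorm_ge: "i \<in> {1..n} \<Longrightarrow> j \<in> {1..n} \<Longrightarrow> \<bar>F i j\<bar> \<le> maxnorm n F"
  unfolding maxnorm_def maxnorm_set by (rule Max_ge) auto

lemma maxnorm_le_iff: "n \<ge> 1 \<Longrightarrow> maxnorm n F \<le> c \<longleftrightarrow> (\<forall>i\<in>{1..n}. \<forall>j\<in>{1..n}. \<bar>F i j\<bar> \<le> c)"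
  unfolding maxnorm_def maxnorm_set by (subst Max_le_iff) auto

lemma maxnorm_nonneg: "n \<ge> 1 \<Longrightarrow> maxnorm n F \<ge> 0"
  using maxnorm_ge[of 1 n 1 F] by auto

lemma r_le:
  fixes r :: "nat \<Rightarrow> nat" and m a b :: nat
  assumes r_mono: "\<And>k. k \<in> {1..<m} \<Longrightarrow> r k < r (k + 1)"
  shows "1 \<le> a \<Longrightarrow> a \<le> b \<Longrightarrow> b \<le> m \<Longrightarrow> r a \<le> r b"
proof (induction b rule: nat_induct)
  case 0 thus ?case by simp
next
  case (Suc b)
  show ?case
  proof (cases "a = Suc b")
    case False
    hence "a \<le> b" using Suc by simp
    hence "r a \<le> r b" using Suc by simp
    also have "r b < r (b + 1)" using r_mono[of b] Suc \<open>a \<le> b\<close> by simp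
    finally show ?thesis by simp
  qed simp
qed

lemma r_lt:
  fixes r :: "nat \<Rightarrow> nat" and m a b :: nat
  assumes r_mono: "\<And>k. k \<in> {1..<m} \<Longrightarrow> r k < r (k + 1)"
  shows "1 \<le> a \<Longrightarrow> a < b \<Longrightarrow> b \<le> m \<Longrightarrow> r a < r b"
proof -
  assume a: "1 \<le> a" "a < b" "b \<le> m"
  have "r a < r (a + 1)" using a by (intro r_mono) auto
  also have "r (a + 1) \<le> r b" using r_le[where m=m and r=r, OF r_mono, of "a+1" b] a by simp
  finally show ?thesis .
qed

lemma gamma_facts:
  assumes m2: "m \<ge> 2" and r_pos: "r 1 > 0" and r_mono: "\<And>k. k \<in> {1..<m} \<Longrightarrow> r k < r (k + 1)"
  shows "q \<in> {1..<m} \<Longrightarrow> sqrt (real (r q) / real (r (q + 1))) \<le> gamma_max r m"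
    and "q \<in> {1..<m} \<Longrightarrow> gamma_min r m \<le> sqrt (real (r q) / real (r (q + 1)))"
    and "gamma_max r m < 1" and "gamma_min r m > 0" and "gamma_max r m \<ge> 0" and "gamma_min r m \<le> 1"
proof -
  have S: "{1..m - 1} = {1..<m}" using m2 by auto
  have ne: "{1..<m} \<noteq> {}" using m2 by auto
  have pos: "r k > 0" if "k \<in> {1..m}" for k
    using r_le[where m=m and r=r, OF r_mono, of 1 k] that r_pos by auto
  have each: "0 < sqrt (real (r k) / real (r (k + 1))) \<and> sqrt (real (r k) / real (r (k + 1))) < 1"
    if k: "k \<in> {1..<m}" for k
  proof -
    have "r k > 0" using pos k by auto
    moreover have "r k < r (k+1)" using r_mono k by simp
    ultimately show ?thesis by (simp add: real_sqrt_less_iff[of _ 1, simplified] )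
  qed
  show "q \<in> {1..<m} \<Longrightarrow> sqrt (real (r q) / real (r (q + 1))) \<le> gamma_max r m"
    unfolding gamma_max_def S by (rule Max_ge) auto
  show "q \<in> {1..<m} \<Longrightarrow> gamma_min r m \<le> sqrt (real (r q) / real (r (q + 1)))"
    unfolding gamma_min_def S by (rule Min_le) auto
  have "gamma_max r m \<in> (\<lambda>k. sqrt (real (r k) / real (r (k + 1)))) ` {1..<m}"
    unfolding gamma_max_def S by (rule Max_in) (use ne in auto)
  thus "gamma_max r m < 1" "gamma_max r m \<ge> 0" using each by auto
  have "gamma_min r m \<in> (\<lambda>k. sqrt (real (r k) / real (r (k + 1)))) ` {1..<m}"
    unfolding gamma_min_def S by (rule Min_in) (use ne in auto)
  thus "gamma_min r m > 0" "gamma_min r m \<le> 1" using each by (auto, smt (verit))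
qed




lemma determ:
  fixes r :: "nat \<Rightarrow> nat" and m t n kh r' i j :: nat and A \<beta> :: real
    and Ch avg :: "nat \<Rightarrow> nat \<Rightarrow> nat \<Rightarrow> real" and Ct :: "nat \<Rightarrow> nat \<Rightarrow> real" and b :: "nat \<Rightarrow> real"
  assumes m2: "m \<ge> 2" and r_pos: "r 1 > 0" and r_mono: "\<And>k. k \<in> {1..<m} \<Longrightarrow> r k < r (k + 1)"
    and A0: "A \<ge> 0" and beta: "\<beta> > 0"
    and H1: "\<And>k i j. k \<in> {1..m} \<Longrightarrow> r k \<le> t \<Longrightarrow> i \<in> {1..n} \<Longrightarrow> j \<in> {1..n} \<Longrightarrow>
               \<bar>Ch k i j - avg k i j\<bar> \<le> A / sqrt (real (r k))"
    and H2: "\<And>k i j. k \<in> {1..<m} \<Longrightarrow> r (k + 1) \<le> t \<Longrightarrow> i \<in> {1..n} \<Longrightarrow> j \<in> {1..n} \<Longrightarrow>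
               \<bar>(Ch (k + 1) i j - Ch k i j) - (avg (k + 1) i j - avg k i j)\<bar>
                 \<le> A * sqrt ((1 - real (r k) / real (r (k + 1))) / real (r k))"
    and H3: "\<And>k i j. k \<in> {1..m} \<Longrightarrow> r k \<le> t \<Longrightarrow> i \<in> {1..n} \<Longrightarrow> j \<in> {1..n} \<Longrightarrow>
               \<bar>avg k i j - Ct i j\<bar> \<le> b (r k)"
    and bmono: "\<And>a c. a \<le> c \<Longrightarrow> b a \<le> b c" and b0: "\<And>a. b a \<ge> 0"
    and kh: "1 \<le> kh" "kh \<le> m"
    and pass: "\<And>k i j. 1 \<le> k \<Longrightarrow> k < kh \<Longrightarrow> i \<in> {1..n} \<Longrightarrow> j \<in> {1..n} \<Longrightarrow>
               \<bar>Ch (k + 1) i j - Ch k i j\<bar>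
                 \<le> A * (2 * \<beta> / sqrt (real (r k)) + sqrt ((1 - real (r k) / real (r (k + 1))) / real (r k)))"
    and fail: "kh \<le> m - 1 \<Longrightarrow> r (kh + 1) \<le> t \<Longrightarrow> \<exists>i\<in>{1..n}. \<exists>j\<in>{1..n}.
               \<bar>Ch (kh + 1) i j - Ch kh i j\<bar>
                 > A * (2 * \<beta> / sqrt (real (r kh)) + sqrt ((1 - real (r kh) / real (r (kh + 1))) / real (r kh)))"
    and rr: "r 1 \<le> r'" "r' \<le> t" "r' \<le> r m"
    and ij: "i \<in> {1..n}" "j \<in> {1..n}"
  shows "\<bar>Ch kh i j - Ct i j\<bar> \<le> Phi r m \<beta> * (A / sqrt (real r') + b r')"
proof -
  have gf1: "sqrt (real (r q) / real (r (q + 1))) \<le> gamma_max r m" if "q \<in> {1..<m}" for q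
    by (rule gamma_facts(1)[of m r q]) (use m2 r_pos r_mono that in auto)
  have gf2: "gamma_min r m \<le> sqrt (real (r q) / real (r (q + 1)))" if "q \<in> {1..<m}" for q
    by (rule gamma_facts(2)[of m r q]) (use m2 r_pos r_mono that in auto)
  have gf3: "gamma_max r m < 1" "gamma_min r m > 0" "gamma_max r m \<ge> 0" "gamma_min r m \<le> 1"
    by (rule gamma_facts(3-6)[of m r]; use m2 r_pos r_mono in auto)+
  define gM where "gM = gamma_max r m"
  define gm where "gm = gamma_min r m"
  define P where "P = Phi r m \<beta>"
  define sq where "sq = (\<lambda>k. sqrt (real (r k)))"
  have gM1: "gM < 1" and gM0: "gM \<ge> 0" and gm0: "gm > 0" and gm1: "gm \<le> 1"
    using gf3 unfolding gM_def gm_def by auto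
  have rpos: "r k > 0" if "k \<in> {1..m}" for k
    using r_le[where m=m and r=r, OF r_mono, of 1 k] that r_pos by auto
  have sqpos: "sq k > 0" if "k \<in> {1..m}" for k using rpos[OF that] unfolding sq_def by simp
  have r'pos: "r' > 0" using rr r_pos by simp
  have P1: "P \<ge> 1 + (2 * \<beta> + 2) / (gm * (1 - gM))" and P2: "P \<ge> 1 + (2 * \<beta> + 2) / (\<beta> * (1 - gM))"
    unfolding P_def Phi_def gM_def[symmetric] gm_def[symmetric] by auto
  have Pge1: "P \<ge> 1" using P2 beta gM1 by (smt (verit) divide_pos_pos mult_pos_pos)
  have Aq0: "A / sqrt (real r') \<ge> 0" using A0 by simp
  have vle: "sqrt ((1 - real (r k) / real (r (k + 1))) / real (r k)) \<le> 1 / sq k" if k: "k \<in> {1..<m}" for k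
  proof -
    have "(1 - real (r k) / real (r (k + 1))) / real (r k) \<le> 1 / real (r k)"
      using rpos[of k] k by (intro divide_right_mono) auto
    hence "sqrt ((1 - real (r k) / real (r (k + 1))) / real (r k)) \<le> sqrt (1 / real (r k))"
      by (rule real_sqrt_le_mono)
    thus ?thesis unfolding sq_def by (simp add: real_sqrt_divide)
  qed
  have ratio: "1 / sq (k + 1) \<le> gM / sq k" if k: "k \<in> {1..<m}" for k
  proof -
    have "sq k / sq (k + 1) \<le> gM"
      using gf1[OF k] unfolding gM_def sq_def by (simp only: real_sqrt_divide)
    moreover have "sq k > 0" "sq (k + 1) > 0" using sqpos k by auto
    ultimately show ?thesis by (simp add: field_simps)
  qed
  define K where "K = {k\<in>{1..m}. r k \<le> r'}"
  define ks where "ks = Max K"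
  have finK: "finite K" unfolding K_def by simp
  have "1 \<in> K" unfolding K_def using rr m2 by auto
  hence ksK: "ks \<in> K" unfolding ks_def using finK by (intro Max_in) auto
  hence ks1: "1 \<le> ks" and ksm: "ks \<le> m" and rks: "r ks \<le> r'" unfolding K_def by auto
  have ksnext: "r' < r (ks + 1)" if "ks < m"
  proof (rule ccontr)
    assume "\<not> r' < r (ks + 1)"
    hence "ks + 1 \<in> K" unfolding K_def using that by auto
    hence "ks + 1 \<le> ks" unfolding ks_def using finK by (intro Max_ge) auto
    thus False by simp
  qed
  define Q where "Q = A / sqrt (real r') + b r'"
  show ?thesis
  proof (cases "kh < ks")
    case True
    have khm: "kh \<le> m - 1" "kh \<in> {1..<m}" using True ksm kh by auto
    have "r (kh + 1) \<le> r ks" using r_le[where m=m and r=r, OF r_mono, of "kh+1" ks] True ksm by simp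
    hence rkh1: "r (kh + 1) \<le> r'" using rks by simp
    have rkh: "r kh \<le> r'" using r_le[where m=m and r=r, OF r_mono, of kh "kh+1"] khm rkh1 by simp
    obtain i0 j0 where ij0: "i0 \<in> {1..n}" "j0 \<in> {1..n}" and
      fl: "\<bar>Ch (kh + 1) i0 j0 - Ch kh i0 j0\<bar>
           > A * (2 * \<beta> / sq kh + sqrt ((1 - real (r kh) / real (r (kh + 1))) / real (r kh)))"
      using fail[OF khm(1)] rkh1 rr unfolding sq_def by auto
    have h2: "\<bar>(Ch (kh + 1) i0 j0 - Ch kh i0 j0) - (avg (kh + 1) i0 j0 - avg kh i0 j0)\<bar>
                 \<le> A * sqrt ((1 - real (r kh) / real (r (kh + 1))) / real (r kh))"
      using H2[OF khm(2) _ ij0] rkh1 rr by simp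
    have e1: "\<bar>avg (kh + 1) i0 j0 - Ct i0 j0\<bar> \<le> b r'"
      using H3[of "kh+1", OF _ _ ij0] khm rkh1 rr bmono[OF rkh1] by force
    have e2: "\<bar>avg kh i0 j0 - Ct i0 j0\<bar> \<le> b r'"
      using H3[of "kh", OF _ _ ij0] khm rkh rr bmono[OF rkh] by force
    have "2 * \<beta> * (A / sq kh) < 2 * b r'"
      using fl h2 e1 e2 by (simp add: algebra_simps)
    hence "\<beta> * (A / sq kh) < b r'" by simp
    hence lt: "A / sq kh < b r' / \<beta>" using beta by (simp add: pos_less_divide_eq mult.commute)
    have c1: "\<bar>Ch kh i j - avg kh i j\<bar> \<le> A / sq kh"
      using H1[OF _ _ ij] khm rkh rr unfolding sq_def by simp
    have c2: "\<bar>avg kh i j - Ct i j\<bar> \<le> b r'"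
      using H3[of "kh", OF _ _ ij] khm rkh rr bmono[OF rkh] by force
    have "\<bar>Ch kh i j - Ct i j\<bar> \<le> b r' / \<beta> + b r'" using c1 c2 lt by linarith
    also have "\<dots> = (1 + 1 / \<beta>) * b r'" by (simp add: algebra_simps)
    also have "\<dots> \<le> P * b r'"
    proof (rule mult_right_mono[OF _ b0])
      have "(2 * \<beta> + 2) / (\<beta> * (1 - gM)) \<ge> (2 * \<beta> + 2) / \<beta>"
        using beta gM1 gM0 by (intro divide_left_mono mult_pos_pos) (auto simp: mult_le_cancel_left1)
      moreover have "(2 * \<beta> + 2) / \<beta> \<ge> 1 / \<beta>" using beta by (intro divide_right_mono) auto
      ultimately show "1 + 1 / \<beta> \<le> P" using P2 by linarith
    qed
    also have "\<dots> \<le> P * Q" unfolding Q_def using Pge1 Aq0 by (intro mult_left_mono) auto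
    finally show ?thesis unfolding P_def Q_def .
  next
    case False
    hence kskh: "ks \<le> kh" by simp
    define c where "c = A * (2 * \<beta> + 1)"
    have c0: "c \<ge> 0" unfolding c_def using A0 beta by simp
    have geo: "1 / sq k \<le> gM ^ (k - ks) / sq ks" if "ks \<le> k" "k \<le> m" for k
      using that
    proof (induction k rule: dec_induct)
      case base thus ?case by simp
    next
      case (step k)
      have "1 / sq (k + 1) \<le> gM / sq k" using ratio[of k] step ks1 by simp
      also have "\<dots> \<le> gM * (gM ^ (k - ks) / sq ks)"
      proof -
        have ih: "1 / sq k \<le> gM ^ (k - ks) / sq ks" using step by simp
        show ?thesis using mult_left_mono[OF ih gM0] by simp
      qed
      also have "\<dots> = gM ^ (Suc k - ks) / sq ks" using step by (simp add: Suc_diff_le)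
      finally show ?case by simp
    qed
    have tele: "\<bar>Ch k i j - Ch ks i j\<bar> \<le> c * ((1 - gM ^ (k - ks)) / (1 - gM)) / sq ks"
      if "ks \<le> k" "k \<le> kh" for k
      using that
    proof (induction k rule: dec_induct)
      case base thus ?case by simp
    next
      case (step k)
      have km: "k \<in> {1..<m}" using step ks1 kh by auto
      have p: "\<bar>Ch (k + 1) i j - Ch k i j\<bar>
                 \<le> A * (2 * \<beta> / sq k + sqrt ((1 - real (r k) / real (r (k + 1))) / real (r k)))"
        using pass[OF _ _ ij, of k] step ks1 unfolding sq_def by simp
      have "A * (2 * \<beta> / sq k + sqrt ((1 - real (r k) / real (r (k + 1))) / real (r k)))
            \<le> A * (2 * \<beta> / sq k + 1 / sq k)"
        using vle[OF km] A0 by (intro mult_left_mono) auto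
      hence "\<bar>Ch (k + 1) i j - Ch k i j\<bar> \<le> A * (2 * \<beta> / sq k + 1 / sq k)" using p by linarith
      also have "\<dots> = c * (1 / sq k)" unfolding c_def by (simp add: add_divide_distrib algebra_simps)
      also have "\<dots> \<le> c * (gM ^ (k - ks) / sq ks)"
        using geo[of k] step kh c0 by (intro mult_left_mono) auto
      finally have s1: "\<bar>Ch (k + 1) i j - Ch k i j\<bar> \<le> c * (gM ^ (k - ks) / sq ks)" .
      have "(1 - gM ^ (k - ks)) / (1 - gM) + gM ^ (k - ks) = (1 - gM ^ (Suc k - ks)) / (1 - gM)"
        using gM1 step by (simp add: Suc_diff_le field_simps)
      hence "c * ((1 - gM ^ (k - ks)) / (1 - gM) + gM ^ (k - ks)) / sq ks
             = c * ((1 - gM ^ (Suc k - ks)) / (1 - gM)) / sq ks" by simp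
      moreover have "c * ((1 - gM ^ (k - ks)) / (1 - gM)) / sq ks + c * (gM ^ (k - ks) / sq ks)
             = c * ((1 - gM ^ (k - ks)) / (1 - gM) + gM ^ (k - ks)) / sq ks"
        by (simp only: distrib_left add_divide_distrib times_divide_eq_right)
      ultimately have "c * ((1 - gM ^ (k - ks)) / (1 - gM)) / sq ks + c * (gM ^ (k - ks) / sq ks)
             = c * ((1 - gM ^ (Suc k - ks)) / (1 - gM)) / sq ks" by simp
      thus ?case using step s1 by simp
    qed
    have sqks: "sq ks > 0" using sqpos ks1 ksm by simp
    have T: "\<bar>Ch kh i j - Ch ks i j\<bar> \<le> c / (1 - gM) / sq ks"
    proof -
      have "(1 - gM ^ (kh - ks)) / (1 - gM) \<le> 1 / (1 - gM)"
        using gM1 gM0 by (intro divide_right_mono) auto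
      hence "c * ((1 - gM ^ (kh - ks)) / (1 - gM)) / sq ks \<le> c * (1 / (1 - gM)) / sq ks"
        using c0 sqks gM1 gM0 by (intro divide_right_mono mult_left_mono) auto
      thus ?thesis using tele[OF kskh order_refl] by simp
    qed
    have c1: "\<bar>Ch ks i j - avg ks i j\<bar> \<le> A / sq ks"
      using H1[OF _ _ ij] ks1 ksm rks rr unfolding sq_def by simp
    have c2: "\<bar>avg ks i j - Ct i j\<bar> \<le> b r'"
      using H3[of ks, OF _ _ ij] ks1 ksm rks rr bmono[OF rks] by force
    have gmsq: "gm * sqrt (real r') \<le> sq ks"
    proof (cases "ks < m")
      case True
      have "gm \<le> sqrt (real (r ks) / real (r (ks + 1)))"
        using gf2[of ks] True ks1 unfolding gm_def by simp
      also have "\<dots> \<le> sqrt (real (r ks) / real r')"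
        using ksnext[OF True] r'pos by (intro real_sqrt_le_mono divide_left_mono) auto
      also have "\<dots> = sq ks / sqrt (real r')" unfolding sq_def by (simp add: real_sqrt_divide)
      finally show ?thesis using r'pos by (simp add: field_simps)
    next
      case False
      hence "ks = m" using ksm by simp
      hence "r' = r ks" using rks rr by simp
      thus ?thesis using gm1 mult_right_mono[OF gm1, of "sqrt (real (r ks))"] unfolding sq_def by simp
    qed
    have inv: "A / sq ks \<le> A / (gm * sqrt (real r'))"
      using gmsq gm0 r'pos A0 sqks by (intro divide_left_mono) auto
    have "\<bar>Ch kh i j - Ct i j\<bar> \<le> c / (1 - gM) / sq ks + A / sq ks + b r'"
      using T c1 c2 by linarith
    also have "c / (1 - gM) / sq ks + A / sq ks = (A / sq ks) * ((2 * \<beta> + 1) / (1 - gM) + 1)"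
      unfolding c_def using sqks gM1 by (simp add: field_simps)
    also have "\<dots> \<le> (A / sq ks) * ((2 * \<beta> + 2) / (1 - gM))"
    proof (rule mult_left_mono)
      have "(2 * \<beta> + 1) / (1 - gM) + 1 = (2 * \<beta> + 2 - gM) / (1 - gM)" using gM1 by (simp add: field_simps)
      also have "\<dots> \<le> (2 * \<beta> + 2) / (1 - gM)" using gM1 gM0 by (intro divide_right_mono) auto
      finally show "(2 * \<beta> + 1) / (1 - gM) + 1 \<le> (2 * \<beta> + 2) / (1 - gM)" .
    qed (use A0 sqks in simp)
    also have "\<dots> \<le> (A / (gm * sqrt (real r'))) * ((2 * \<beta> + 2) / (1 - gM))"
      using inv gM1 beta by (intro mult_right_mono) auto
    also have "\<dots> = (A / sqrt (real r')) * ((2 * \<beta> + 2) / (gm * (1 - gM)))"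
      by (simp add: field_simps)
    also have "\<dots> \<le> (A / sqrt (real r')) * (P - 1)"
      using P1 Aq0 by (intro mult_left_mono) auto
    finally have "\<bar>Ch kh i j - Ct i j\<bar> \<le> (A / sqrt (real r')) * (P - 1) + b r'" by simp
    also have "\<dots> \<le> P * Q"
    proof -
      have "b r' \<le> P * b r'" using mult_right_mono[OF Pge1 b0[of r']] by simp
      moreover have "(A / sqrt (real r')) * (P - 1) \<le> (A / sqrt (real r')) * P"
        using Aq0 by (intro mult_left_mono) auto
      ultimately have "(A / sqrt (real r')) * (P - 1) + b r' \<le> (A / sqrt (real r')) * P + P * b r'"
        by linarith
      also have "\<dots> = P * Q" unfolding Q_def by (simp add: distrib_left mult.commute)
      finally show ?thesis .
    qed
    finally show ?thesis unfolding P_def Q_def .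
  qed
qed




definition wwin :: "nat \<Rightarrow> nat \<Rightarrow> nat \<Rightarrow> real" where
  "wwin t r u = (if u \<in> {t - r + 1..t} then 1 / real r else 0)"

lemma win_sub: "{t - r + 1..t} \<subseteq> {1..(t::nat)}"
proof -
  have "1 \<le> t - r + 1" by simp
  thus ?thesis by (meson atLeastatMost_subset_iff order_refl)
qed

lemma card_win: "r \<le> t \<Longrightarrow> card {t - r + 1..t} = (r::nat)" by simp

lemma sum_win: "(\<Sum>u\<in>{1..t}. wwin t r u * f u) = (1 / real r) * (\<Sum>u\<in>{t - r + 1..t}. f u)"
proof -
  have "(\<Sum>u\<in>{1..t}. wwin t r u * f u) = (\<Sum>u\<in>{1..t}. if u \<in> {t - r + 1..t} then 1 / real r * f u else 0)"
    unfolding wwin_def by (intro sum.cong) auto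
  also have "\<dots> = (\<Sum>u\<in>{1..t} \<inter> {t - r + 1..t}. 1 / real r * f u)"
    by (rule sum.inter_restrict[symmetric]) simp
  also have "{1..t} \<inter> {t - r + 1..t} = {t - r + 1..t}" using win_sub by blast
  finally show ?thesis by (simp add: sum_distrib_left)
qed

lemma emp_win: "emp_corr ell X r t \<omega> i j = (\<Sum>u\<in>{1..t}. wwin t r u * (ell i (X u \<omega>) * ell j (X u \<omega>)))"
  unfolding emp_corr_def sum_win ..

lemma sumsq_win: assumes "0 < r" "r \<le> t" shows "(\<Sum>u\<in>{1..t}. (wwin t r u)\<^sup>2) = 1 / real r"
proof -
  have "(\<Sum>u\<in>{1..t}. (wwin t r u)\<^sup>2) = (\<Sum>u\<in>{1..t}. wwin t r u * wwin t r u)"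
    by (simp add: power2_eq_square)
  also have "\<dots> = (1 / real r) * (\<Sum>u\<in>{t - r + 1..t}. wwin t r u)" by (rule sum_win)
  also have "(\<Sum>u\<in>{t - r + 1..t}. wwin t r u) = (\<Sum>u\<in>{t - r + 1..t}. 1 / real r)"
    unfolding wwin_def by (intro sum.cong) auto
  also have "\<dots> = 1" using assms by simp
  finally show ?thesis by simp
qed

lemma sumsq_diff: assumes "0 < a" "a < b" "b \<le> t"
  shows "(\<Sum>u\<in>{1..t}. (wwin t b u - wwin t a u)\<^sup>2) = (1 - real a / real b) / real a"
proof -
  have sab: "{t - a + 1..t} \<subseteq> {t - b + 1..t}" using assms by auto
  have cross: "(\<Sum>u\<in>{1..t}. wwin t b u * wwin t a u) = 1 / real b"
  proof -
    have "(\<Sum>u\<in>{1..t}. wwin t b u * wwin t a u) = (1 / real b) * (\<Sum>u\<in>{t - b + 1..t}. wwin t a u)"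
      by (rule sum_win)
    also have "(\<Sum>u\<in>{t - b + 1..t}. wwin t a u) = (\<Sum>u\<in>{t - b + 1..t}. if u \<in> {t - a + 1..t} then 1 / real a else 0)"
      unfolding wwin_def ..
    also have "\<dots> = (\<Sum>u\<in>{t - b + 1..t} \<inter> {t - a + 1..t}. 1 / real a)"
      by (rule sum.inter_restrict[symmetric]) simp
    also have "{t - b + 1..t} \<inter> {t - a + 1..t} = {t - a + 1..t}" using sab by blast
    also have "(\<Sum>u\<in>{t - a + 1..t}. 1 / real a) = 1" using assms by simp
    finally show ?thesis by simp
  qed
  have "(\<Sum>u\<in>{1..t}. (wwin t b u - wwin t a u)\<^sup>2)
      = (\<Sum>u\<in>{1..t}. (wwin t b u)\<^sup>2) - 2 * (\<Sum>u\<in>{1..t}. wwin t b u * wwin t a u) + (\<Sum>u\<in>{1..t}. (wwin t a u)\<^sup>2)"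
    by (simp add: power2_diff sum.distrib sum_subtractf sum_distrib_left mult.assoc)
  also have "\<dots> = 1 / real b - 2 * (1 / real b) + 1 / real a"
  proof -
    have e1: "(\<Sum>u\<in>{1..t}. (wwin t b u)\<^sup>2) = 1 / real b" using assms by (intro sumsq_win) auto
    have e2: "(\<Sum>u\<in>{1..t}. (wwin t a u)\<^sup>2) = 1 / real a" using assms by (intro sumsq_win) auto
    show ?thesis unfolding e1 e2 cross ..
  qed
  also have "\<dots> = (1 - real a / real b) / real a" using assms by (simp add: field_simps)
  finally show ?thesis .
qed

lemma tele_abs:
  fixes f :: "nat \<Rightarrow> real"
  assumes "u \<le> t" shows "\<bar>f u - f t\<bar> \<le> (\<Sum>v\<in>{u..<t}. \<bar>f v - f (Suc v)\<bar>)"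
  using assms
proof (induction t rule: dec_induct)
  case base thus ?case by simp
next
  case (step t)
  have "\<bar>f u - f (Suc t)\<bar> \<le> \<bar>f u - f t\<bar> + \<bar>f t - f (Suc t)\<bar>" by linarith
  also have "\<dots> \<le> (\<Sum>v\<in>{u..<t}. \<bar>f v - f (Suc v)\<bar>) + \<bar>f t - f (Suc t)\<bar>" using step by simp
  also have "\<dots> = (\<Sum>v\<in>{u..<Suc t}. \<bar>f v - f (Suc v)\<bar>)" using step by simp
  finally show ?case .
qed

definition bias :: "nat \<Rightarrow> (nat \<Rightarrow> nat \<Rightarrow> nat \<Rightarrow> real) \<Rightarrow> nat \<Rightarrow> nat \<Rightarrow> real" where
  "bias n C t r = (\<Sum>u = t - r + 1..t - 1. maxnorm n (\<lambda>i j. C u i j - C (u + 1) i j))"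

lemma bias_nonneg: "n \<ge> 1 \<Longrightarrow> bias n C t r \<ge> 0"
  unfolding bias_def by (intro sum_nonneg maxnorm_nonneg)

lemma bias_mono: "n \<ge> 1 \<Longrightarrow> a \<le> c \<Longrightarrow> bias n C t a \<le> bias n C t c"
  unfolding bias_def by (intro sum_mono2 maxnorm_nonneg) auto

lemma bias_bound:
  assumes n: "n \<ge> 1" and r: "1 \<le> r" "r \<le> t" and ij: "i \<in> {1..n}" "j \<in> {1..n}"
  shows "\<bar>(\<Sum>u\<in>{1..t}. wwin t r u * C u i j) - C t i j\<bar> \<le> bias n C t r"
proof -
  define W where "W = {t - r + 1..t}"
  have cW: "card W = r" unfolding W_def using r by simp
  have each: "\<bar>C u i j - C t i j\<bar> \<le> bias n C t r" if u: "u \<in> W" for u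
  proof -
    have "\<bar>C u i j - C t i j\<bar> \<le> (\<Sum>v\<in>{u..<t}. \<bar>C v i j - C (Suc v) i j\<bar>)"
      using u unfolding W_def by (intro tele_abs) auto
    also have "\<dots> \<le> (\<Sum>v\<in>{u..<t}. maxnorm n (\<lambda>i j. C v i j - C (v + 1) i j))"
      by (intro sum_mono) (use maxnorm_ge[OF ij] in auto)
    also have "\<dots> \<le> bias n C t r"
      unfolding bias_def using u unfolding W_def by (intro sum_mono2 maxnorm_nonneg n) auto
    finally show ?thesis .
  qed
  have "(\<Sum>u\<in>{1..t}. wwin t r u * C u i j) - C t i j = (1 / real r) * (\<Sum>u\<in>W. C u i j - C t i j)"
    unfolding sum_win W_def[symmetric] using cW r by (simp add: sum_subtractf field_simps)
  also have "\<bar>\<dots>\<bar> \<le> (1 / real r) * (\<Sum>u\<in>W. \<bar>C u i j - C t i j\<bar>)"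
  proof -
    have "\<bar>(1 / real r) * (\<Sum>u\<in>W. C u i j - C t i j)\<bar> = (1 / real r) * \<bar>\<Sum>u\<in>W. C u i j - C t i j\<bar>"
      by (simp add: abs_mult)
    thus ?thesis by (metis mult_left_mono sum_abs of_nat_0_le_iff zero_le_divide_1_iff)
  qed
  also have "\<dots> \<le> (1 / real r) * (\<Sum>u\<in>W. bias n C t r)"
    by (intro mult_left_mono sum_mono each) auto
  also have "\<dots> = bias n C t r" using cW r by simp
  finally show ?thesis .
qed




lemma maxnorm_meas:
  assumes "\<And>i j. i \<in> {1..n} \<Longrightarrow> j \<in> {1..n} \<Longrightarrow> (\<lambda>\<omega>. F \<omega> i j) \<in> borel_measurable M"
  shows "(\<lambda>\<omega>. maxnorm n (F \<omega>)) \<in> borel_measurable M"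
proof -
  have "(\<lambda>\<omega>. maxnorm n (F \<omega>)) = (\<lambda>\<omega>. Max ((\<lambda>p. \<bar>F \<omega> (fst p) (snd p)\<bar>) ` ({1..n} \<times> {1..n})))"
    unfolding maxnorm_def maxnorm_set by (simp add: split_def)
  also have "\<dots> \<in> borel_measurable M"
    by (rule borel_measurable_Max[where f="\<lambda>p \<omega>. \<bar>F \<omega> (fst p) (snd p)\<bar>"])
       (auto intro!: borel_measurable_abs assms)
  finally show ?thesis .
qed

context setting begin

lemma dev_diff: "dev (\<lambda>u. w1 u - w2 u) i j \<omega> = dev w1 i j \<omega> - dev w2 i j \<omega>"
  unfolding dev_def by (simp add: left_diff_distrib sum_subtractf)

lemma dev_win: "dev (wwin t r) i j \<omega> = emp_corr ell X r t \<omega> i j - (\<Sum>u\<in>{1..t}. wwin t r u * corr_mat ell D u i j)"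
  unfolding dev_def emp_win g_def by (simp add: right_diff_distrib sum_subtractf)

lemma emp_meas: assumes "i \<in> {1..n}" "j \<in> {1..n}"
  shows "(\<lambda>\<omega>. emp_corr ell X r t \<omega> i j) \<in> borel_measurable M"
proof -
  have "(\<lambda>\<omega>. g i j (X u \<omega>)) \<in> borel_measurable M" if "u \<in> {1..t}" for u
    using that assms by (intro measurable_compose[OF X_meas g_meas]) auto
  moreover have "(\<lambda>\<omega>. emp_corr ell X r t \<omega> i j) = (\<lambda>\<omega>. \<Sum>u\<in>{1..t}. wwin t r u * g i j (X u \<omega>))"
    by (simp add: emp_win g_def)
  ultimately show ?thesis
    by (simp only:) (intro borel_measurable_sum borel_measurable_times borel_measurable_const, auto)
qed

end

theorem lemma2:
  fixes M :: "'m measure"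
    and X :: "nat \<Rightarrow> 'm \<Rightarrow> real ^ 'd"
    and D :: "nat \<Rightarrow> (real ^ 'd) measure"
    and y :: "real ^ 'd \<Rightarrow> real"
    and ell :: "nat \<Rightarrow> real ^ 'd \<Rightarrow> real"
    and n m t :: nat and r :: "nat \<Rightarrow> nat"
    and \<delta> \<beta> \<tau> :: real
  assumes M: "prob_space M"
    and D_prob: "\<And>k. k \<ge> 1 \<Longrightarrow> prob_space (D k)"
    and D_sets: "\<And>k. k \<ge> 1 \<Longrightarrow> sets (D k) = sets borel"
    and y_meas: "y \<in> borel_measurable borel"
    and y_val: "\<And>x. y x \<in> {-1, 1}"
    and ell_meas: "\<And>i. i \<in> {1..n} \<Longrightarrow> ell i \<in> borel_measurable borel"
    and ell_val: "\<And>i x. i \<in> {1..n} \<Longrightarrow> ell i x \<in> {-1, 1}"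
    and A1: "\<And>t'. distr M (PiM {1..t'} D) (\<lambda>\<omega>. \<lambda>k\<in>{1..t'}. X k \<omega>) = PiM {1..t'} D"
    and A2: "\<And>t' i j c. t' \<ge> 1 \<Longrightarrow> i \<in> {1..n} \<Longrightarrow> j \<in> {1..n} \<Longrightarrow> i \<noteq> j \<Longrightarrow> c \<in> {-1, 1} \<Longrightarrow>
               measure (D t') {x. ell i x \<noteq> y x \<and> ell j x \<noteq> y x \<and> y x = c} * measure (D t') {x. y x = c}
             = measure (D t') {x. ell i x \<noteq> y x \<and> y x = c} * measure (D t') {x. ell j x \<noteq> y x \<and> y x = c}"
    and tau: "\<tau> > 0"
    and A3: "\<And>t' i. t' \<ge> 1 \<Longrightarrow> i \<in> {1..n} \<Longrightarrow> measure (D t') {x. ell i x = y x} \<ge> 1 / 2 + \<tau>"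
    and n3: "n \<ge> 3"
    and delta: "0 < \<delta>" "\<delta> < 1"
    and beta: "\<beta> > 0"
    and m2: "m \<ge> 2"
    and r_pos: "r 1 > 0"
    and r_mono: "\<And>k. k \<in> {1..<m} \<Longrightarrow> r k < r (k + 1)"
    and t_ge: "t \<ge> r 1"
  shows "prob_space.prob M {\<omega> \<in> space M.
           maxnorm n (\<lambda>i j. adapt_matrix ell X n r m \<delta> \<beta> t \<omega> i j - corr_mat ell D t i j)
           \<le> Phi r m \<beta> *
              Min ((\<lambda>r'. A_const \<delta> n m / sqrt (real r')
                      + (\<Sum>u = t - r' + 1..t - 1.
                           maxnorm n (\<lambda>i j. corr_mat ell D u i j - corr_mat ell D (u + 1) i j)))
                   ` {r 1..min t (r m)})}
         \<ge> 1 - \<delta>"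
proof -
  have t1: "t \<ge> 1" using t_ge r_pos by simp
  interpret S: setting M X D ell n t
    by (rule setting.intro; fact M D_prob D_sets ell_meas ell_val A1 t1)
  have n1: "n \<ge> 1" using n3 by simp
  define A where "A = A_const \<delta> n m"
  define K where "K = (2 * real m - 1) * real n * (real n - 1)"
  have K1: "K \<ge> 1"
  proof -
    have "2 * real m - 1 \<ge> 3" using m2 by simp
    moreover have "real n \<ge> 3" "real n - 1 \<ge> 2" using n3 by auto
    ultimately have "(2 * real m - 1) * real n \<ge> 3 * 3" by (intro mult_mono) auto
    hence "(2 * real m - 1) * real n * (real n - 1) \<ge> 9 * 2"
      using \<open>real n - 1 \<ge> 2\<close> by (intro mult_mono) auto
    thus ?thesis unfolding K_def by simp
  qed
  have Kd: "K / \<delta> > 1" using K1 delta by (simp add: less_divide_eq)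
  have lnpos: "ln (K / \<delta>) > 0" using Kd by simp
  have A0: "A \<ge> 0" unfolding A_def A_const_def K_def[symmetric] using lnpos by simp
  have A2: "A\<^sup>2 = 2 * ln (K / \<delta>)"
    unfolding A_def A_const_def K_def[symmetric] using lnpos by simp
  have expA: "exp (- (A\<^sup>2) / 2) = \<delta> / K"
  proof -
    have "exp (- (A\<^sup>2) / 2) = exp (- ln (K / \<delta>))" unfolding A2 by simp
    also have "\<dots> = 1 / (K / \<delta>)" using Kd by (simp add: exp_minus inverse_eq_divide)
    finally show ?thesis by simp
  qed
  have rpos: "r k > 0" if "k \<in> {1..m}" for k
    using r_le[where m=m and r=r, OF r_mono, of 1 k] that r_pos by auto
  define wd where "wd = (\<lambda>k u. wwin t (r (k + 1)) u - wwin t (r k) u)"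
  define Wset where "Wset = (\<lambda>k. wwin t (r k)) ` {1..m} \<union> wd ` {1..<m}"
  define OD where "OD = (\<Union>i\<in>{1..n}. {i} \<times> ({1..n} - {i}))"
  define bad where "bad = (\<lambda>q. {\<omega>\<in>space M. S.dev (if fst (snd q) < snd (snd q) then fst q else (\<lambda>u. - fst q u))
                        (fst (snd q)) (snd (snd q)) \<omega> > A * sqrt (\<Sum>u\<in>{1..t}. (fst q u)\<^sup>2)})"
  define U where "U = (\<Union>q\<in>Wset \<times> OD. bad q)"
  have finW: "finite Wset" unfolding Wset_def by simp
  have finOD: "finite OD" unfolding OD_def by simp
  have ODsub: "OD \<subseteq> {1..n} \<times> {1..n}" unfolding OD_def by auto
  have cardW: "card Wset \<le> 2 * m - 1"
  proof -
    have "card Wset \<le> card ((\<lambda>k. wwin t (r k)) ` {1..m}) + card (wd ` {1..<m})"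
      unfolding Wset_def by (rule card_Un_le)
    also have "\<dots> \<le> card {1..m} + card {1..<m}" by (intro add_mono card_image_le) auto
    finally show ?thesis using m2 by simp
  qed
  have cardOD: "card OD \<le> n * (n - 1)"
  proof -
    have "card OD \<le> (\<Sum>i\<in>{1..n}. card ({i} \<times> ({1..n} - {i})))"
      unfolding OD_def by (rule card_UN_le) simp
    also have "\<dots> = (\<Sum>i\<in>{1..n}. n - 1)"
      by (intro sum.cong) (auto simp: card_cartesian_product_singleton)
    finally show ?thesis by simp
  qed
  have badm: "bad q \<in> sets M" if q: "q \<in> Wset \<times> OD" for q
  proof -
    have ij: "fst (snd q) \<in> {1..n}" "snd (snd q) \<in> {1..n}" using q ODsub by auto
    show ?thesis unfolding bad_def
      by (rule borel_measurable_less[OF borel_measurable_const S.dev_meas[OF ij]])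
  qed
  have badp: "measure M (bad q) \<le> \<delta> / K" if q: "q \<in> Wset \<times> OD" for q
  proof -
    obtain w i j where qe: "q = (w, (i, j))" by (metis prod.collapse)
    have ij: "i \<in> {1..n}" "j \<in> {1..n}" using q ODsub qe by auto
    define w' where "w' = (if i < j then w else (\<lambda>u. - w u))"
    have ss: "(\<Sum>u\<in>{1..t}. (w' u)\<^sup>2) = (\<Sum>u\<in>{1..t}. (w u)\<^sup>2)" unfolding w'_def by simp
    have "bad q = {\<omega>\<in>space M. S.dev w' i j \<omega> > A * sqrt (\<Sum>u\<in>{1..t}. (w' u)\<^sup>2)}"
      unfolding bad_def qe ss w'_def by simp
    also have "measure M \<dots> \<le> exp (- (A\<^sup>2) / 2)" by (rule S.hoeff[OF ij A0])
    finally show ?thesis unfolding expA .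
  qed
  have Um: "U \<in> sets M" unfolding U_def using finW finOD badm by (intro sets.finite_UN) auto
  have probU: "measure M U \<le> \<delta>"
  proof -
    have "measure M U \<le> (\<Sum>q\<in>Wset \<times> OD. measure M (bad q))"
      unfolding U_def using finW finOD badm by (intro measure_UNION_le) auto
    also have "\<dots> \<le> real (card (Wset \<times> OD)) * (\<delta> / K)"
      by (rule sum_bounded_above) (use badp in auto)
    also have "real (card (Wset \<times> OD)) \<le> K"
    proof -
      have "card (Wset \<times> OD) = card Wset * card OD" by (simp add: card_cartesian_product)
      also have "\<dots> \<le> (2 * m - 1) * (n * (n - 1))" by (intro mult_mono cardW cardOD) auto
      finally have "real (card (Wset \<times> OD)) \<le> real ((2 * m - 1) * (n * (n - 1)))" by linarith
      also have "\<dots> = K" unfolding K_def using m2 n1 by (simp add: of_nat_diff)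
      finally show ?thesis .
    qed
    hence "real (card (Wset \<times> OD)) * (\<delta> / K) \<le> K * (\<delta> / K)"
      using delta K1 by (intro mult_right_mono) auto
    also have "\<dots> = \<delta>" using K1 by simp
    finally show ?thesis .
  qed
  have good: "\<bar>S.dev w i j \<omega>\<bar> \<le> A * sqrt (\<Sum>u\<in>{1..t}. (w u)\<^sup>2)"
    if \<omega>: "\<omega> \<in> space M - U" and w: "w \<in> Wset" and ij: "i \<in> {1..n}" "j \<in> {1..n}" for \<omega> w i j
  proof (rule ccontr)
    define e where "e = A * sqrt (\<Sum>u\<in>{1..t}. (w u)\<^sup>2)"
    assume "\<not> \<bar>S.dev w i j \<omega>\<bar> \<le> A * sqrt (\<Sum>u\<in>{1..t}. (w u)\<^sup>2)"
    hence gt: "\<bar>S.dev w i j \<omega>\<bar> > e" unfolding e_def by simp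
    have e0: "e \<ge> 0" unfolding e_def using A0 by (intro mult_nonneg_nonneg real_sqrt_ge_zero sum_nonneg) auto
    have "i \<noteq> j" using gt e0 S.dev_diag[OF ij(1)] by auto
    hence ODs: "(i, j) \<in> OD" "(j, i) \<in> OD" using ij unfolding OD_def by auto
    have inU: "\<omega> \<in> bad (w, (i, j)) \<or> \<omega> \<in> bad (w, (j, i))"
    proof (cases "S.dev w i j \<omega> > e")
      case True
      thus ?thesis using \<omega> \<open>i \<noteq> j\<close> unfolding bad_def e_def
        by (cases "i < j") (auto simp: S.dev_sym[of w i j])
    next
      case False
      hence "S.dev w i j \<omega> < - e" using gt by linarith
      thus ?thesis using \<omega> \<open>i \<noteq> j\<close> unfolding bad_def e_def
        by (cases "i < j") (auto simp: S.dev_neg S.dev_sym[of w i j])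
    qed
    thus False using \<omega> w ODs unfolding U_def by auto
  qed
  let ?test = "adapt_test ell X n r A \<beta> t"
  have kh_props: "1 \<le> adapt_index ell X n r m \<delta> \<beta> t \<omega> \<and> adapt_index ell X n r m \<delta> \<beta> t \<omega> \<le> m \<and>
     (\<forall>q\<in>{1..<adapt_index ell X n r m \<delta> \<beta> t \<omega>}. ?test \<omega> q) \<and>
     \<not> (adapt_index ell X n r m \<delta> \<beta> t \<omega> \<le> m - 1 \<and> ?test \<omega> (adapt_index ell X n r m \<delta> \<beta> t \<omega>))" for \<omega>
  proof -
    have e: "adapt_index ell X n r m \<delta> \<beta> t \<omega> = adapt_loop (?test \<omega>) m 1"
      unfolding adapt_index_def A_def by (rule refl)
    show ?thesis unfolding e by (rule loop_props) (use m2 in auto)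
  qed
  define Phi_min where "Phi_min = Phi r m \<beta> *
              Min ((\<lambda>r'. A_const \<delta> n m / sqrt (real r')
                      + (\<Sum>u = t - r' + 1..t - 1.
                           maxnorm n (\<lambda>i j. corr_mat ell D u i j - corr_mat ell D (u + 1) i j)))
                   ` {r 1..min t (r m)})"
  define T where "T = {\<omega> \<in> space M.
           maxnorm n (\<lambda>i j. adapt_matrix ell X n r m \<delta> \<beta> t \<omega> i j - corr_mat ell D t i j) \<le> Phi_min}"
  have sub: "space M - U \<subseteq> T"
  proof
    fix \<omega> assume \<omega>: "\<omega> \<in> space M - U"
    define kh where "kh = adapt_index ell X n r m \<delta> \<beta> t \<omega>"
    note khp = kh_props[of \<omega>, folded kh_def]
    have main: "\<bar>emp_corr ell X (r kh) t \<omega> i j - corr_mat ell D t i j\<bar>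
                 \<le> Phi r m \<beta> * (A / sqrt (real r') + bias n (corr_mat ell D) t r')"
      if rr: "r 1 \<le> r'" "r' \<le> t" "r' \<le> r m" and ij: "i \<in> {1..n}" "j \<in> {1..n}" for r' i j
    proof (rule determ[where Ch="\<lambda>k i j. emp_corr ell X (r k) t \<omega> i j"
          and avg="\<lambda>k i j. \<Sum>u\<in>{1..t}. wwin t (r k) u * corr_mat ell D u i j"
          and Ct="corr_mat ell D t" and b="bias n (corr_mat ell D) t" and n=n and t=t,
          OF m2 r_pos r_mono A0 beta _ _ _ _ _ _ _ _ _ rr ij])
      fix k i j assume k: "k \<in> {1..m}" "r k \<le> t" and ij: "i \<in> {1..n}" "j \<in> {1..n}"
      have wk: "wwin t (r k) \<in> Wset" unfolding Wset_def using k by auto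
      have "\<bar>emp_corr ell X (r k) t \<omega> i j - (\<Sum>u\<in>{1..t}. wwin t (r k) u * corr_mat ell D u i j)\<bar>
            = \<bar>S.dev (wwin t (r k)) i j \<omega>\<bar>" by (simp add: S.dev_win)
      also have "\<dots> \<le> A * sqrt (\<Sum>u\<in>{1..t}. (wwin t (r k) u)\<^sup>2)" by (rule good[OF \<omega> wk ij])
      also have "\<dots> = A / sqrt (real (r k))"
      proof -
        have "(\<Sum>u\<in>{1..t}. (wwin t (r k) u)\<^sup>2) = 1 / real (r k)"
          using k rpos[OF k(1)] by (intro sumsq_win) auto
        thus ?thesis by (simp add: real_sqrt_divide)
      qed
      finally show "\<bar>emp_corr ell X (r k) t \<omega> i j - (\<Sum>u\<in>{1..t}. wwin t (r k) u * corr_mat ell D u i j)\<bar>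
            \<le> A / sqrt (real (r k))" .
    next
      fix k i j assume k: "k \<in> {1..<m}" "r (k + 1) \<le> t" and ij: "i \<in> {1..n}" "j \<in> {1..n}"
      have wk: "wd k \<in> Wset" unfolding Wset_def using k by auto
      have lt: "r k < r (k + 1)" using r_mono k by simp
      have rk0: "0 < r k" using rpos k by simp
      have "\<bar>(emp_corr ell X (r (k + 1)) t \<omega> i j - emp_corr ell X (r k) t \<omega> i j) -
             ((\<Sum>u\<in>{1..t}. wwin t (r (k + 1)) u * corr_mat ell D u i j) - (\<Sum>u\<in>{1..t}. wwin t (r k) u * corr_mat ell D u i j))\<bar>
            = \<bar>S.dev (wd k) i j \<omega>\<bar>" unfolding wd_def S.dev_diff S.dev_win by simp
      also have "\<dots> \<le> A * sqrt (\<Sum>u\<in>{1..t}. (wd k u)\<^sup>2)" by (rule good[OF \<omega> wk ij])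
      also have "(\<Sum>u\<in>{1..t}. (wd k u)\<^sup>2) = (1 - real (r k) / real (r (k + 1))) / real (r k)"
        unfolding wd_def using sumsq_diff[OF rk0 lt k(2)] .
      finally show "\<bar>(emp_corr ell X (r (k + 1)) t \<omega> i j - emp_corr ell X (r k) t \<omega> i j) -
             ((\<Sum>u\<in>{1..t}. wwin t (r (k + 1)) u * corr_mat ell D u i j) - (\<Sum>u\<in>{1..t}. wwin t (r k) u * corr_mat ell D u i j))\<bar>
            \<le> A * sqrt ((1 - real (r k) / real (r (k + 1))) / real (r k))" .
    next
      fix k i j assume k: "k \<in> {1..m}" "r k \<le> t" and ij: "i \<in> {1..n}" "j \<in> {1..n}"
      show "\<bar>(\<Sum>u\<in>{1..t}. wwin t (r k) u * corr_mat ell D u i j) - corr_mat ell D t i j\<bar>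
            \<le> bias n (corr_mat ell D) t (r k)"
        using rpos[OF k(1)] k by (intro bias_bound n1 ij) auto
    next
      fix a c :: nat assume "a \<le> c"
      thus "bias n (corr_mat ell D) t a \<le> bias n (corr_mat ell D) t c" by (intro bias_mono n1)
    next
      fix a show "bias n (corr_mat ell D) t a \<ge> 0" by (intro bias_nonneg n1)
    next
      show "1 \<le> kh" "kh \<le> m" using khp by auto
    next
      fix k i j assume k: "1 \<le> k" "k < kh" and ij: "i \<in> {1..n}" "j \<in> {1..n}"
      have "?test \<omega> k" using khp k by auto
      hence "maxnorm n (\<lambda>i j. emp_corr ell X (r (k + 1)) t \<omega> i j - emp_corr ell X (r k) t \<omega> i j)
              \<le> A * (2 * \<beta> / sqrt (real (r k)) + sqrt ((1 - real (r k) / real (r (k + 1))) / real (r k)))"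
        unfolding adapt_test_def by simp
      thus "\<bar>emp_corr ell X (r (k + 1)) t \<omega> i j - emp_corr ell X (r k) t \<omega> i j\<bar>
              \<le> A * (2 * \<beta> / sqrt (real (r k)) + sqrt ((1 - real (r k) / real (r (k + 1))) / real (r k)))"
        using maxnorm_ge[OF ij, of "\<lambda>i j. emp_corr ell X (r (k + 1)) t \<omega> i j - emp_corr ell X (r k) t \<omega> i j"]
        by linarith
    next
      assume a: "kh \<le> m - 1" "r (kh + 1) \<le> t"
      hence "\<not> ?test \<omega> kh" using khp by auto
      hence "\<not> maxnorm n (\<lambda>i j. emp_corr ell X (r (kh + 1)) t \<omega> i j - emp_corr ell X (r kh) t \<omega> i j)
              \<le> A * (2 * \<beta> / sqrt (real (r kh)) + sqrt ((1 - real (r kh) / real (r (kh + 1))) / real (r kh)))"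
        unfolding adapt_test_def using a by simp
      thus "\<exists>i\<in>{1..n}. \<exists>j\<in>{1..n}. \<bar>emp_corr ell X (r (kh + 1)) t \<omega> i j - emp_corr ell X (r kh) t \<omega> i j\<bar>
              > A * (2 * \<beta> / sqrt (real (r kh)) + sqrt ((1 - real (r kh) / real (r (kh + 1))) / real (r kh)))"
        unfolding maxnorm_le_iff[OF n1] by (auto simp: not_le)
    qed
    define phi where "phi = (\<lambda>r'. A_const \<delta> n m / sqrt (real r')
                      + (\<Sum>u = t - r' + 1..t - 1.
                           maxnorm n (\<lambda>i j. corr_mat ell D u i j - corr_mat ell D (u + 1) i j)))"
    have ne: "{r 1..min t (r m)} \<noteq> {}"
      using t_ge r_le[where m=m and r=r, OF r_mono, of 1 m] m2 by auto
    have "Min (phi ` {r 1..min t (r m)}) \<in> phi ` {r 1..min t (r m)}"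
      using ne by (intro Min_in) auto
    then obtain rs where rs: "rs \<in> {r 1..min t (r m)}" and rse: "Min (phi ` {r 1..min t (r m)}) = phi rs"
      by auto
    have "maxnorm n (\<lambda>i j. adapt_matrix ell X n r m \<delta> \<beta> t \<omega> i j - corr_mat ell D t i j)
            \<le> Phi r m \<beta> * phi rs"
      unfolding maxnorm_le_iff[OF n1]
    proof (intro ballI)
      fix i j assume ij: "i \<in> {1..n}" "j \<in> {1..n}"
      have "phi rs = A / sqrt (real rs) + bias n (corr_mat ell D) t rs"
        unfolding phi_def A_def bias_def ..
      thus "\<bar>adapt_matrix ell X n r m \<delta> \<beta> t \<omega> i j - corr_mat ell D t i j\<bar> \<le> Phi r m \<beta> * phi rs"
        using main[of rs i j] rs ij unfolding adapt_matrix_def kh_def[symmetric] by auto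
    qed
    thus "\<omega> \<in> T" unfolding T_def Phi_min_def phi_def[symmetric] rse using \<omega> by simp
  qed
  have testm: "{\<omega>\<in>space M. ?test \<omega> q} \<in> sets M" for q
  proof -
    have "{\<omega>\<in>space M. ?test \<omega> q} = {\<omega>\<in>space M. r (q + 1) \<le> t \<and>
      maxnorm n (\<lambda>i j. emp_corr ell X (r (q + 1)) t \<omega> i j - emp_corr ell X (r q) t \<omega> i j)
        \<le> A * (2 * \<beta> / sqrt (real (r q)) + sqrt ((1 - real (r q) / real (r (q + 1))) / real (r q)))}"
      unfolding adapt_test_def ..
    also have "\<dots> \<in> sets M"
      by (intro sets.sets_Collect_conj sets.sets_Collect_const borel_measurable_le
            maxnorm_meas borel_measurable_diff S.emp_meas borel_measurable_const)
    finally show ?thesis .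
  qed
  have idxm: "{\<omega>\<in>space M. adapt_index ell X n r m \<delta> \<beta> t \<omega> = k} \<in> sets M" if k: "k \<in> {1..m}" for k
  proof -
    have "{\<omega>\<in>space M. adapt_index ell X n r m \<delta> \<beta> t \<omega> = k} =
          {\<omega>\<in>space M. (\<forall>q\<in>{1..<k}. ?test \<omega> q) \<and> \<not> (k \<le> m - 1 \<and> ?test \<omega> k)}"
      unfolding adapt_index_def A_def[symmetric] using k m2
      by (subst loop_char) auto
    also have "\<dots> \<in> sets M"
      by (intro sets.sets_Collect_conj sets.sets_Collect_neg sets.sets_Collect_finite_All
            sets.sets_Collect_const testm) auto
    finally show ?thesis .
  qed
  have Tm: "T \<in> sets M"
  proof -
    have "T = {\<omega>\<in>space M. \<exists>k\<in>{1..m}. adapt_index ell X n r m \<delta> \<beta> t \<omega> = k \<and>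
           maxnorm n (\<lambda>i j. emp_corr ell X (r k) t \<omega> i j - corr_mat ell D t i j) \<le> Phi_min}"
      unfolding T_def adapt_matrix_def using kh_props by auto
    also have "\<dots> \<in> sets M"
      by (intro sets.sets_Collect_finite_Ex sets.sets_Collect_conj idxm borel_measurable_le
            maxnorm_meas borel_measurable_diff S.emp_meas borel_measurable_const) auto
    finally show ?thesis .
  qed
  have "1 - \<delta> \<le> 1 - measure M U" using probU by simp
  also have "1 - measure M U = measure M (space M - U)" using S.prob_compl[OF Um] by simp
  also have "\<dots> \<le> measure M T" by (rule S.finite_measure_mono[OF sub Tm])
  finally show ?thesis unfolding T_def Phi_min_def .
qed


end
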